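(* Let $\alpha\in(0,1)$. There is a constant $C$ depending only on $\alpha$ such that for all $f_1,f_2\in\mathcal V_1$, $$|c(f_1)-c(f_2)|\le C\,\|\rho(f_1-f_2)\|_{L^\infty}^{1-\alpha}.$$
   Context: Fix $\alpha\in(0,1)$ and set $c_{1,\alpha}=\frac{2^{2\alpha-1}\Gamma(\frac12+\alpha)}{\sqrt{\pi}\,\Gamma(1-\alpha)}$. Let $\rho(x)=(1+|x|)^{-\alpha}$ and $\mathcal V_0=\{f\in C(\mathbb{R}): f\text{ even},\ \|\rho f\|_{L^\infty}<\infty\}$. Let $\eta=2\left(\frac{3}{2(3-2\alpha)(5-2\alpha)(1+4^{\alpha})}\right)^{1/\min(\alpha,1-\alpha)}$. $\mathcal V_1$ is the set of $f\in\mathcal V_0$ such that $f(0)=1$; $f\ge0$ and $f$ is non-increasing on $[0,\infty)$; $x\mapsto f(\sqrt x)$ is convex on $[0,\infty)$; $f(x)\ge\max(0,1-x^2)$ for all $x$; and $f'_-(1/2)\le-\eta$. For $f\in\mathcal V_1$, $c(f)=\frac{2\alpha(1+2\alpha)}{3}c_{1,\alpha}\int_0^\infty\frac{1-f(\xi)}{\xi^{1+2\alpha}}\,d\xi$. *)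

theory Defs
  imports "HOL-Analysis.Analysis"
begin

definition c1 :: "real \<Rightarrow> real" where
  "c1 \<alpha> = 2 powr (2*\<alpha> - 1) * Gamma (1/2 + \<alpha>) / (sqrt pi * Gamma (1 - \<alpha>))"

definition rho :: "real \<Rightarrow> real \<Rightarrow> real" where
  "rho \<alpha> x = (1 + \<bar>x\<bar>) powr (- \<alpha>)"

definition V0 :: "real \<Rightarrow> (real \<Rightarrow> real) set" where
  "V0 \<alpha> = {f. continuous_on UNIV f \<and> (\<forall>x. f (-x) = f x)
              \<and> (\<exists>B. \<forall>x. \<bar>rho \<alpha> x * f x\<bar> \<le> B)}"

definition eta :: "real \<Rightarrow> real" where
  "eta \<alpha> = 2 * (3 / (2 * (3 - 2*\<alpha>) * (5 - 2*\<alpha>) * (1 + 4 powr \<alpha>)))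
                 powr (1 / min \<alpha> (1 - \<alpha>))"

definition has_left_deriv :: "(real \<Rightarrow> real) \<Rightarrow> real \<Rightarrow> real \<Rightarrow> bool" where
  "has_left_deriv f a d \<longleftrightarrow> ((\<lambda>h. (f a - f (a - h)) / h) \<longlongrightarrow> d) (at_right 0)"

definition V1 :: "real \<Rightarrow> (real \<Rightarrow> real) set" where
  "V1 \<alpha> = {f \<in> V0 \<alpha>. f 0 = 1
      \<and> (\<forall>x\<ge>0. f x \<ge> 0)
      \<and> (\<forall>x y. 0 \<le> x \<longrightarrow> x \<le> y \<longrightarrow> f y \<le> f x)
      \<and> convex_on {0..} (\<lambda>x. f (sqrt x))
      \<and> (\<forall>x. f x \<ge> max 0 (1 - x^2))
      \<and> (\<exists>d. has_left_deriv f (1/2) d \<and> d \<le> - eta \<alpha>)}"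

definition cf :: "real \<Rightarrow> (real \<Rightarrow> real) \<Rightarrow> real" where
  "cf \<alpha> f = 2 * \<alpha> * (1 + 2*\<alpha>) / 3 * c1 \<alpha> *
      (LINT \<xi>:{0<..}|lborel. (1 - f \<xi>) / \<xi> powr (1 + 2*\<alpha>))"

definition weighted_sup_norm :: "real \<Rightarrow> (real \<Rightarrow> real) \<Rightarrow> real" where
  "weighted_sup_norm \<alpha> g = (SUP x. \<bar>rho \<alpha> x * g x\<bar>)"

end

theory Submission
  imports Defs
begin

lemma V1_props:
  assumes "f \<in> V1 \<alpha>"
  shows "continuous_on UNIV f" "\<And>x. f (-x) = f x" "\<And>x. x \<ge> 0 \<Longrightarrow> 0 \<le> f x \<and> f x \<le> 1"
        "\<And>x. 1 - x^2 \<le> f x"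
  using assms unfolding V1_def V0_def by auto

lemma V1_abs_le1:
  assumes "f \<in> V1 \<alpha>" shows "\<bar>f x\<bar> \<le> 1"
proof (cases "x \<ge> 0")
  case True then show ?thesis using V1_props(3)[OF assms] by force
next
  case False then have "f x = f (-x)" using V1_props(2)[OF assms, of "-x"] by simp
  then show ?thesis using V1_props(3)[OF assms, of "-x"] False by force
qed

lemma dom_int:
  fixes \<alpha> t A B :: real
  assumes a: "0 < \<alpha>" "\<alpha> < 1" and t: "0 < t"
  shows "((\<lambda>x. (if x \<in> {0<..t} then x powr (1-2*\<alpha>) else 0)
              + A * (if x \<in> {t..} then x powr (-1-2*\<alpha>) else 0)
              + B * (if x \<in> {1..} then x powr (-1-\<alpha>) else 0))
        has_integral (t powr (2-2*\<alpha>)/(2-2*\<alpha>) + A * (t powr (-2*\<alpha>)/(2*\<alpha>)) + B * (1/\<alpha>))) {0<..}"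
proof -
  have i1: "((\<lambda>x. x powr (1-2*\<alpha>)) has_integral (t powr (2-2*\<alpha>)/(2-2*\<alpha>))) {0..t}"
    using has_integral_powr_from_0[of "1-2*\<alpha>" t] a t by (simp add: algebra_simps)
  have i1': "((\<lambda>x. x powr (1-2*\<alpha>)) has_integral (t powr (2-2*\<alpha>)/(2-2*\<alpha>))) {0<..t}"
  proof (rule has_integral_spike_set_eq[THEN iffD1, OF _ _ i1])
    show "negligible {x \<in> {0..t} - {0<..t}. x powr (1 - 2 * \<alpha>) \<noteq> 0}"
      by (rule negligible_subset[of "{0}"]) auto
    show "negligible {x \<in> {0<..t} - {0..t}. x powr (1 - 2 * \<alpha>) \<noteq> 0}" by (rule negligible_subset[of "{}"]) auto
  qed
  have i2: "((\<lambda>x. x powr (-1-2*\<alpha>)) has_integral (t powr (-2*\<alpha>)/(2*\<alpha>))) {t..}"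
    using has_integral_powr_to_inf[of "-1-2*\<alpha>" t] a t by (simp add: algebra_simps)
  have i3: "((\<lambda>x. x powr (-1-\<alpha>)) has_integral (1/\<alpha>)) {1..}"
    using has_integral_powr_to_inf[of "-1-\<alpha>" 1] a by (simp add: algebra_simps)
  have j1: "((\<lambda>x. if x \<in> {0<..t} then x powr (1-2*\<alpha>) else 0) has_integral (t powr (2-2*\<alpha>)/(2-2*\<alpha>))) {0<..}"
    using i1' by (subst has_integral_restrict) auto
  have j2: "((\<lambda>x. if x \<in> {t..} then x powr (-1-2*\<alpha>) else 0) has_integral (t powr (-2*\<alpha>)/(2*\<alpha>))) {0<..}"
    using i2 t by (subst has_integral_restrict) auto
  have j3: "((\<lambda>x. if x \<in> {1..} then x powr (-1-\<alpha>) else 0) has_integral (1/\<alpha>)) {0<..}"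
    using i3 by (subst has_integral_restrict) auto
  show ?thesis
    by (intro has_integral_add has_integral_mult_right j1 j2 j3)
qed

definition Kc :: "real \<Rightarrow> real" where
  "Kc \<alpha> = 2 * \<alpha> * (1 + 2*\<alpha>) / 3 * c1 \<alpha>"

lemma V1_integrable:
  assumes a: "0 < \<alpha>" "\<alpha> < 1" and f: "f \<in> V1 \<alpha>"
  shows "(\<lambda>\<xi>. (1 - f \<xi>) / \<xi> powr (1 + 2*\<alpha>)) absolutely_integrable_on {0<..}"
        "cf \<alpha> f = Kc \<alpha> * integral {0<..} (\<lambda>\<xi>. (1 - f \<xi>) / \<xi> powr (1 + 2*\<alpha>))"
proof -
  let ?g = "\<lambda>\<xi>. (1 - f \<xi>) / \<xi> powr (1 + 2*\<alpha>)"
  let ?h = "\<lambda>x::real. (if x \<in> {0<..1} then x powr (1-2*\<alpha>) else 0)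
              + 1 * (if x \<in> {1..} then x powr (-1-2*\<alpha>) else 0)
              + 0 * (if x \<in> {1..} then x powr (-1-\<alpha>) else 0)"
  have hint: "?h integrable_on {0<..}"
    using dom_int[OF a, of 1 1 0] unfolding integrable_on_def by fastforce
  have fc: "continuous_on UNIV f" using V1_props(1)[OF f] .
  have cont: "continuous_on {0<..} ?g"
    by (intro continuous_intros continuous_on_subset[OF fc]) auto
  have meas: "?g \<in> borel_measurable (lebesgue_on {0<..})"
    by (rule continuous_imp_measurable_on_sets_lebesgue[OF cont]) auto
  have bound: "norm (?g x) \<le> ?h x" if x: "x \<in> {0<..}" for x
  proof -
    have x0: "x > 0" using x by simp
    have b1: "0 \<le> 1 - f x" "1 - f x \<le> 1" "1 - f x \<le> x^2"
      using V1_props(3)[OF f, of x] V1_props(4)[OF f, of x] x0 by auto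
    have pp: "x powr (1 + 2*\<alpha>) > 0" using x0 by simp
    show ?thesis
    proof (cases "x \<le> 1")
      case True
      have "norm (?g x) = (1 - f x) / x powr (1 + 2*\<alpha>)" using b1 pp by simp
      also have "\<dots> \<le> x powr 2 / x powr (1 + 2*\<alpha>)"
        using b1 pp x0 by (intro divide_right_mono) (auto simp: powr_numeral)
      also have "\<dots> = x powr (2 - (1 + 2*\<alpha>))" by (rule powr_diff[symmetric])
      also have "\<dots> = x powr (1 - 2*\<alpha>)" by (simp add: algebra_simps)
      finally show ?thesis using True x0 by auto
    next
      case False
      have "norm (?g x) = (1 - f x) / x powr (1 + 2*\<alpha>)" using b1 pp by simp
      also have "\<dots> \<le> 1 / x powr (1 + 2*\<alpha>)"
        using b1 pp x0 by (intro divide_right_mono) auto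
      also have "\<dots> = x powr (-1 - 2*\<alpha>)" using x0 by (simp add: powr_minus_divide[symmetric] powr_minus)
      finally show ?thesis using False x0 by auto
    qed
  qed
  show ai: "?g absolutely_integrable_on {0<..}"
    by (rule measurable_bounded_by_integrable_imp_absolutely_integrable[OF meas _ hint bound]) auto
  have bm: "(\<lambda>x. indicator {0<..} x *\<^sub>R ?g x) \<in> borel_measurable lborel"
    using borel_measurable_continuous_onI[OF fc] by measurable
  have "set_integrable lebesgue {0<..} ?g" using ai by (simp add: absolutely_integrable_on_def)
  then have si: "set_integrable lborel {0<..} ?g"
    unfolding set_integrable_def using integrable_completion[OF bm] by (simp only:)
  show "cf \<alpha> f = Kc \<alpha> * integral {0<..} ?g"
    unfolding cf_def Kc_def using set_borel_integral_eq_integral(2)[OF si] by simp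
qed

lemma rho_pos: "rho \<alpha> x > 0" unfolding rho_def by simp

lemma rho_le1: "0 \<le> \<alpha> \<Longrightarrow> rho \<alpha> x \<le> 1"
proof -
  assume "0 \<le> \<alpha>"
  then have "1 \<le> (1 + \<bar>x\<bar>) powr \<alpha>" by (intro ge_one_powr_ge_zero) auto
  then show ?thesis unfolding rho_def by (simp add: powr_minus inverse_le_1_iff)
qed

lemma inv_rho: "1 / rho \<alpha> x = (1 + \<bar>x\<bar>) powr \<alpha>"
  unfolding rho_def by (simp add: powr_minus divide_inverse)

theorem mainTheorem5:
  fixes \<alpha> :: real
  assumes "0 < \<alpha>" and "\<alpha> < 1"
  shows "\<exists>C. \<forall>f1 \<in> V1 \<alpha>. \<forall>f2 \<in> V1 \<alpha>.
           \<bar>cf \<alpha> f1 - cf \<alpha> f2\<bar> \<le> C * (weighted_sup_norm \<alpha> (\<lambda>x. f1 x - f2 x)) powr (1 - \<alpha>)"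
proof (intro exI ballI)
  have a: "0 < \<alpha>" "\<alpha> < 1" using assms by auto
  fix f1 f2 assume f1: "f1 \<in> V1 \<alpha>" and f2: "f2 \<in> V1 \<alpha>"
  define \<delta> where "\<delta> = weighted_sup_norm \<alpha> (\<lambda>x. f1 x - f2 x)"
  have dle: "\<bar>f1 x - f2 x\<bar> \<le> 1" for x
    using V1_abs_le1[OF f1, of x] V1_abs_le1[OF f2, of x] V1_props(3)[OF f1, of "\<bar>x\<bar>"]
      V1_props(3)[OF f2, of "\<bar>x\<bar>"] V1_props(2)[OF f1, of x] V1_props(2)[OF f2, of x]
    by (cases "x \<ge> 0") auto
  have rb: "\<bar>rho \<alpha> x * (f1 x - f2 x)\<bar> \<le> 1" for x
  proof -
    have "\<bar>rho \<alpha> x * (f1 x - f2 x)\<bar> = rho \<alpha> x * \<bar>f1 x - f2 x\<bar>"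
      using rho_pos[of \<alpha> x] by (simp add: abs_mult)
    also have "\<dots> \<le> 1 * 1" using rho_pos[of \<alpha> x] rho_le1[of \<alpha> x] a dle[of x]
      by (intro mult_mono) auto
    finally show ?thesis by simp
  qed
  have bdd: "bdd_above (range (\<lambda>x. \<bar>rho \<alpha> x * (f1 x - f2 x)\<bar>))"
    using rb by (intro bdd_aboveI2) 
  have dupper: "\<bar>rho \<alpha> x * (f1 x - f2 x)\<bar> \<le> \<delta>" for x
    unfolding \<delta>_def weighted_sup_norm_def by (rule cSUP_upper[OF _ bdd]) auto
  have d1: "\<delta> \<le> 1"
    unfolding \<delta>_def weighted_sup_norm_def by (rule cSUP_least) (use rb in auto)
  have d0: "\<delta> \<ge> 0" using dupper[of 0] by linarith
  have dpt: "\<bar>f1 x - f2 x\<bar> \<le> \<delta> * (1 + \<bar>x\<bar>) powr \<alpha>" for x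
  proof -
    have "rho \<alpha> x * \<bar>f1 x - f2 x\<bar> \<le> \<delta>"
      using dupper[of x] rho_pos[of \<alpha> x] by (simp add: abs_mult)
    then have "\<bar>f1 x - f2 x\<bar> \<le> \<delta> / rho \<alpha> x"
      using rho_pos[of \<alpha> x] by (simp add: field_simps)
    also have "\<dots> = \<delta> * (1 / rho \<alpha> x)" by simp
    finally show ?thesis by (simp add: inv_rho)
  qed
  define K where "K = Kc \<alpha>"
  define C where "C = \<bar>K\<bar> * (1/(2-2*\<alpha>) + 1/\<alpha> + 2/\<alpha>)"
  let ?g1 = "\<lambda>\<xi>. (1 - f1 \<xi>) / \<xi> powr (1 + 2*\<alpha>)"
  let ?g2 = "\<lambda>\<xi>. (1 - f2 \<xi>) / \<xi> powr (1 + 2*\<alpha>)"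
  have i1: "?g1 integrable_on {0<..}" using V1_integrable(1)[OF a f1]
    using absolutely_integrable_on_def by blast
  have i2: "?g2 integrable_on {0<..}" using V1_integrable(1)[OF a f2]
    using absolutely_integrable_on_def by blast
  have eq: "cf \<alpha> f1 - cf \<alpha> f2 = K * integral {0<..} (\<lambda>\<xi>. ?g1 \<xi> - ?g2 \<xi>)"
    using V1_integrable(2)[OF a f1] V1_integrable(2)[OF a f2] integral_diff[OF i1 i2]
    by (simp add: K_def right_diff_distrib)
  show "\<bar>cf \<alpha> f1 - cf \<alpha> f2\<bar> \<le> C * \<delta> powr (1 - \<alpha>)"
  proof (cases "\<delta> = 0")
    case True
    then have "f1 x = f2 x" for x using dpt[of x] by simp
    then have "f1 = f2" by auto
    then show ?thesis using True by simp
  next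
    case False
    then have dp: "\<delta> > 0" using d0 by simp
    define t where "t = \<delta> powr (1/2)"
    have tp: "t > 0" using dp t_def by simp
    let ?h = "\<lambda>x::real. (if x \<in> {0<..t} then x powr (1-2*\<alpha>) else 0)
              + (2*\<delta>) * (if x \<in> {t..} then x powr (-1-2*\<alpha>) else 0)
              + (2*\<delta>) * (if x \<in> {1..} then x powr (-1-\<alpha>) else 0)"
    have hi: "(?h has_integral (t powr (2-2*\<alpha>)/(2-2*\<alpha>) + (2*\<delta>) * (t powr (-2*\<alpha>)/(2*\<alpha>)) + (2*\<delta>) * (1/\<alpha>))) {0<..}"
      by (rule dom_int[OF a tp])
    have bound: "norm (?g1 x - ?g2 x) \<le> ?h x" if x: "x \<in> {0<..}" for x
    proof -
      have x0: "x > 0" using x by simp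
      have pp: "x powr (1 + 2*\<alpha>) > 0" using x0 by simp
      have nn: "norm (?g1 x - ?g2 x) = \<bar>f1 x - f2 x\<bar> / x powr (1 + 2*\<alpha>)"
        using pp by (simp add: diff_divide_distrib[symmetric] abs_minus_commute)
      have h1: "0 \<le> (if x \<in> {0<..t} then x powr (1-2*\<alpha>) else 0)" by simp
      have h2: "0 \<le> (2*\<delta>) * (if x \<in> {t..} then x powr (-1-2*\<alpha>) else 0)" using dp by simp
      have h3: "0 \<le> (2*\<delta>) * (if x \<in> {1..} then x powr (-1-\<alpha>) else 0)" using dp by simp
      have dx: "\<bar>f1 x - f2 x\<bar> \<le> \<delta> * (1 + x) powr \<alpha>" using dpt[of x] x0 by simp
      show ?thesis
      proof (cases "x \<le> t")
        case True
        have "\<bar>f1 x - f2 x\<bar> \<le> x^2"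
          using V1_props(3)[OF f1, of x] V1_props(4)[OF f1, of x]
            V1_props(3)[OF f2, of x] V1_props(4)[OF f2, of x] x0 by auto
        then have "norm (?g1 x - ?g2 x) \<le> x powr 2 / x powr (1 + 2*\<alpha>)"
          unfolding nn using pp x0 by (intro divide_right_mono) (auto simp: powr_numeral)
        also have "\<dots> = x powr (2 - (1 + 2*\<alpha>))" by (rule powr_diff[symmetric])
        also have "\<dots> = (if x \<in> {0<..t} then x powr (1-2*\<alpha>) else 0)"
          using True x0 by (simp add: algebra_simps)
        finally show ?thesis using h2 h3 by linarith
      next
        case xt: False
        show ?thesis
        proof (cases "x < 1")
          case True
          have "(1 + x) powr \<alpha> \<le> 2 powr \<alpha>" using True x0 a by (intro powr_mono2) auto
          also have "\<dots> \<le> 2 powr 1" using a by (intro powr_mono) auto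
          finally have "(1 + x) powr \<alpha> \<le> 2" by simp
          then have "\<delta> * (1 + x) powr \<alpha> \<le> \<delta> * 2" using dp by (intro mult_left_mono) auto
          then have "\<bar>f1 x - f2 x\<bar> \<le> 2 * \<delta>" using dx by linarith
          then have "norm (?g1 x - ?g2 x) \<le> 2 * \<delta> / x powr (1 + 2*\<alpha>)"
            unfolding nn using pp by (intro divide_right_mono) auto
          also have "\<dots> = (2*\<delta>) * x powr (-1-2*\<alpha>)"
          proof -
            have m: "-1-2*\<alpha> = -(1+2*\<alpha>)" by simp
            show ?thesis unfolding m powr_minus by (simp add: divide_inverse)
          qed
          also have "\<dots> = (2*\<delta>) * (if x \<in> {t..} then x powr (-1-2*\<alpha>) else 0)"
            using xt by simp
          finally show ?thesis using h1 h3 by linarith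
        next
          case False
          have "(1 + x) powr \<alpha> \<le> (2 * x) powr \<alpha>" using False x0 a by (intro powr_mono2) auto
          also have "\<dots> = 2 powr \<alpha> * x powr \<alpha>" using x0 by (simp add: powr_mult)
          also have "\<dots> \<le> 2 * x powr \<alpha>"
          proof -
            have "2 powr \<alpha> \<le> 2 powr 1" using a by (intro powr_mono) auto
            then show ?thesis by (intro mult_right_mono) auto
          qed
          finally have "\<delta> * (1 + x) powr \<alpha> \<le> \<delta> * (2 * x powr \<alpha>)" using dp by (intro mult_left_mono) auto
          then have "\<bar>f1 x - f2 x\<bar> \<le> 2 * \<delta> * x powr \<alpha>" using dx by (simp add: algebra_simps)
          then have "norm (?g1 x - ?g2 x) \<le> 2 * \<delta> * x powr \<alpha> / x powr (1 + 2*\<alpha>)"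
            unfolding nn using pp by (intro divide_right_mono) auto
          also have "\<dots> = (2*\<delta>) * (x powr \<alpha> / x powr (1 + 2*\<alpha>))" by simp
          also have "x powr \<alpha> / x powr (1 + 2*\<alpha>) = x powr (\<alpha> - (1 + 2*\<alpha>))"
            by (rule powr_diff[symmetric])
          also have "(2*\<delta>) * x powr (\<alpha> - (1 + 2*\<alpha>)) = (2*\<delta>) * (if x \<in> {1..} then x powr (-1-\<alpha>) else 0)"
            using False by (simp add: algebra_simps)
          finally show ?thesis using h1 h2 by linarith
        qed
      qed
    qed
    have "norm (integral {0<..} (\<lambda>\<xi>. ?g1 \<xi> - ?g2 \<xi>)) \<le> integral {0<..} ?h"
      by (rule integral_norm_bound_integral[OF integrable_diff[OF i1 i2] _ bound])
         (use hi in \<open>auto simp: integrable_on_def\<close>)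
    also have "\<dots> = t powr (2-2*\<alpha>)/(2-2*\<alpha>) + (2*\<delta>) * (t powr (-2*\<alpha>)/(2*\<alpha>)) + (2*\<delta>) * (1/\<alpha>)"
      using hi by (rule integral_unique)
    also have "\<dots> \<le> (1/(2-2*\<alpha>) + 1/\<alpha> + 2/\<alpha>) * \<delta> powr (1 - \<alpha>)"
    proof -
      have e1: "t powr (2-2*\<alpha>) = \<delta> powr (1 - \<alpha>)"
        unfolding t_def powr_powr by (simp add: algebra_simps)
      have e2: "\<delta> * t powr (-2*\<alpha>) = \<delta> powr (1 - \<alpha>)"
      proof -
        have "t powr (-2*\<alpha>) = \<delta> powr (-\<alpha>)" unfolding t_def powr_powr by simp
        moreover have "\<delta> powr (1-\<alpha>) = \<delta> powr (1 + (-\<alpha>))" by simp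
        moreover have "\<delta> powr (1 + (-\<alpha>)) = \<delta> powr 1 * \<delta> powr (-\<alpha>)" by (rule powr_add)
        ultimately show ?thesis using dp by simp
      qed
      have e3: "\<delta> \<le> \<delta> powr (1 - \<alpha>)"
        using powr_mono'[of "1-\<alpha>" 1 \<delta>] dp d1 a by simp
      have "t powr (2-2*\<alpha>)/(2-2*\<alpha>) + (2*\<delta>) * (t powr (-2*\<alpha>)/(2*\<alpha>)) + (2*\<delta>) * (1/\<alpha>)
          = \<delta> powr (1 - \<alpha>) / (2-2*\<alpha>) + \<delta> powr (1 - \<alpha>) / \<alpha> + 2 * \<delta> / \<alpha>"
        using e1 e2 a by (simp add: field_simps)
      also have "\<dots> \<le> \<delta> powr (1 - \<alpha>) / (2-2*\<alpha>) + \<delta> powr (1 - \<alpha>) / \<alpha> + 2 * \<delta> powr (1 - \<alpha>) / \<alpha>"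
      proof -
        have "2 * \<delta> / \<alpha> \<le> 2 * \<delta> powr (1 - \<alpha>) / \<alpha>" using e3 a by (intro divide_right_mono) auto
        then show ?thesis by linarith
      qed
      finally show ?thesis by (simp add: field_simps)
    qed
    finally have "norm (integral {0<..} (\<lambda>\<xi>. ?g1 \<xi> - ?g2 \<xi>)) \<le> (1/(2-2*\<alpha>) + 1/\<alpha> + 2/\<alpha>) * \<delta> powr (1 - \<alpha>)" .
    then show ?thesis unfolding eq C_def
      by (simp add: abs_mult mult.assoc mult_left_mono)
  qed
qed

end
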